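(* Let $A$ be a unique factorization domain and $R$ a subring of $A$ whose group of units equals that of $A$. Then $\operatorname{Irr}R\subset\operatorname{Irr}A$ if and only if $R$ is factorially closed in $A$, i.e. for all $x,y\in A$, $xy\in R\setminus\{0\}$ implies $x,y\in R$.
   Context: $\operatorname{Irr}R$ denotes the set of irreducible elements of a ring $R$. *)

theory Defs
  imports "HOL-Algebra.Algebra"
begin

end

theory Submission
  imports Defs
begin

lemma (in domain) units_sub:
  assumes "Units (R\<lparr>carrier := S\<rparr>) = Units R"
  shows "Units R \<subseteq> S"
proof -
  have "Units (R\<lparr>carrier := S\<rparr>) \<subseteq> S" unfolding Units_def by auto
  thus ?thesis using assms by simp
qed

lemma (in domain) fc_imp_irr:
  assumes sub: "subring S R" and U: "Units (R\<lparr>carrier := S\<rparr>) = Units R"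
    and FC: "\<forall>x \<in> carrier R. \<forall>y \<in> carrier R. x \<otimes> y \<in> S - {\<zero>} \<longrightarrow> x \<in> S \<and> y \<in> S"
    and xS: "x \<in> S" and irr: "ring_irreducible\<^bsub>R\<lparr>carrier := S\<rparr>\<^esub> x"
  shows "ring_irreducible x"
proof -
  have xc: "x \<in> carrier R" using sub xS subringE(1) by blast
  have x0: "x \<noteq> \<zero>" using irr unfolding ring_irreducible_def by simp
  have irrS: "irreducible (R\<lparr>carrier := S\<rparr>) x" using irr unfolding ring_irreducible_def by simp
  have xnu: "x \<notin> Units R" using irrS U unfolding irreducible_def by simp
  show ?thesis
  proof (rule ring_irreducibleI)
    show "x \<in> carrier R - {\<zero>}" using xc x0 by simp
    show "x \<notin> Units R" by fact
    fix a b assume a: "a \<in> carrier R" and b: "b \<in> carrier R" and xab: "x = a \<otimes> b"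
    have "a \<otimes> b \<in> S - {\<zero>}" using xab xS x0 by simp
    hence aS: "a \<in> S" and bS: "b \<in> S" using FC a b by blast+
    show "a \<in> Units R \<or> b \<in> Units R"
    proof (cases "properfactor (R\<lparr>carrier := S\<rparr>) a x")
      case True
      thus ?thesis using irrS aS U unfolding irreducible_def by auto
    next
      case False
      have "a divides\<^bsub>R\<lparr>carrier := S\<rparr>\<^esub> x" unfolding factor_def using bS xab by auto
      with False have "x divides\<^bsub>R\<lparr>carrier := S\<rparr>\<^esub> a" unfolding properfactor_def by auto
      then obtain c where cS: "c \<in> S" and ac: "a = x \<otimes> c" unfolding factor_def by auto
      have cc: "c \<in> carrier R" using sub cS subringE(1) by blast
      have "x \<otimes> \<one> = x \<otimes> (c \<otimes> b)" using xab ac xc cc b by (simp add: m_assoc)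
      hence "\<one> = c \<otimes> b" using m_lcancel[OF x0 xc one_closed m_closed[OF cc b]] by simp
      hence "b \<in> Units R" using cc b m_comm unfolding Units_def by auto
      thus ?thesis by simp
    qed
  qed
qed


lemma (in factorial_domain) irr_imp_fc:
  assumes sub: "subring S R" and U: "Units (R\<lparr>carrier := S\<rparr>) = Units R"
    and H: "\<forall>x \<in> S. ring_irreducible\<^bsub>R\<lparr>carrier := S\<rparr>\<^esub> x \<longrightarrow> ring_irreducible x"
  shows "\<forall>x \<in> carrier R. \<forall>y \<in> carrier R. x \<otimes> y \<in> S - {\<zero>} \<longrightarrow> x \<in> S \<and> y \<in> S"
proof -
  define good where "good w \<longleftrightarrow> w \<in> S \<and> w \<noteq> \<zero> \<and> (\<forall>x\<in>carrier R. \<forall>y\<in>carrier R. x \<otimes> y = w \<longrightarrow> x \<in> S \<and> y \<in> S)" for w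
  have Sc: "S \<subseteq> carrier R" by (rule subringE(1)[OF sub])
  have US: "Units R \<subseteq> S" using units_sub[OF U] .
  have mS: "a \<otimes> b \<in> S" if "a \<in> S" "b \<in> S" for a b by (rule subringE(6)[OF sub that])
  have goodI: "good v" if "v \<in> S" "v \<noteq> \<zero>" "\<And>x y. x \<in> carrier R \<Longrightarrow> y \<in> carrier R \<Longrightarrow> x \<otimes> y = v \<Longrightarrow> x \<in> S \<and> y \<in> S" for v
    unfolding good_def using that(1,2) that(3)[rule_format] by simp
  have main: "good (r \<otimes> w)" if "r \<in> carrier R - {\<zero>}" "r \<in> S" "good w" for r w
    using that
  proof (induction r arbitrary: w rule: wf_induct[OF division_wellfounded])
    case (1 r w)
    have rc: "r \<in> carrier R" and r0: "r \<noteq> \<zero>" and rS: "r \<in> S" using 1(2,3) by auto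
    have wS: "w \<in> S" and w0: "w \<noteq> \<zero>" and wg: "\<And>x y. x \<in> carrier R \<Longrightarrow> y \<in> carrier R \<Longrightarrow> x \<otimes> y = w \<Longrightarrow> x \<in> S \<and> y \<in> S"
      using 1(4) unfolding good_def by auto
    have IH: "good (y \<otimes> v)" if "properfactor (mult_of R) y r" "y \<in> carrier R - {\<zero>}" "y \<in> S" "good v" for y v
      using 1(1) that rc r0 by simp
    have wc: "w \<in> carrier R" using wS Sc by blast
    have rwS: "r \<otimes> w \<in> S" using mS rS wS by blast
    have rw0: "r \<otimes> w \<noteq> \<zero>" using integral rc wc r0 w0 by blast
    show ?case
    proof (cases "r \<in> Units R")
      case True
      show ?thesis
      proof (rule goodI[OF rwS rw0])
        fix x y assume x: "x \<in> carrier R" and y: "y \<in> carrier R" and e: "x \<otimes> y = r \<otimes> w"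
        have ic: "inv r \<in> carrier R" using True by simp
        have "(inv r \<otimes> x) \<otimes> y = inv r \<otimes> (r \<otimes> w)" using e ic x y by (simp add: m_assoc)
        also have "\<dots> = w" using True wc rc ic by (simp add: m_assoc[symmetric] Units_l_inv)
        finally have "(inv r \<otimes> x) \<otimes> y = w" .
        hence a: "inv r \<otimes> x \<in> S" and yS: "y \<in> S" using wg[OF m_closed[OF ic x] y] by blast+
        have "x = r \<otimes> (inv r \<otimes> x)" using True x rc ic by (simp add: m_assoc[symmetric] Units_r_inv)
        hence "x \<in> S" using mS[OF rS a] by simp
        thus "x \<in> S \<and> y \<in> S" using yS by simp
      qed
    next
      case nU: False
      show ?thesis
      proof (cases "ring_irreducible\<^bsub>R\<lparr>carrier := S\<rparr>\<^esub> r")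
        case True
        hence ri: "ring_irreducible r" using H rS by blast
        have "prime (mult_of R) r" using irreducible_prime ring_irreducibleE(3)[OF rc ri] rc r0 by simp
        hence pr: "prime R r" using prime_eq_prime_mult rc by blast
        show ?thesis
        proof (rule goodI[OF rwS rw0])
          fix x y assume x: "x \<in> carrier R" and y: "y \<in> carrier R" and e: "x \<otimes> y = r \<otimes> w"
          have "r divides (x \<otimes> y)" unfolding factor_def using e wc by auto
          hence "r divides x \<or> r divides y" using pr x y unfolding prime_def by blast
          thus "x \<in> S \<and> y \<in> S"
          proof
            assume "r divides x"
            then obtain x' where x': "x' \<in> carrier R" "x = r \<otimes> x'" unfolding factor_def by auto
            have "r \<otimes> (x' \<otimes> y) = r \<otimes> w" using e x' y rc by (simp add: m_assoc)
            hence "x' \<otimes> y = w" using m_lcancel[OF r0 rc] x' y wc by simp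
            hence "x' \<in> S" "y \<in> S" using wg[OF x'(1) y] by blast+
            thus ?thesis using x' mS rS by simp
          next
            assume "r divides y"
            then obtain y' where y': "y' \<in> carrier R" "y = r \<otimes> y'" unfolding factor_def by auto
            have "r \<otimes> (x \<otimes> y') = x \<otimes> (r \<otimes> y')" using y' x rc by (simp add: m_lcomm)
            hence "r \<otimes> (x \<otimes> y') = r \<otimes> w" using e y'(2) by simp
            hence "x \<otimes> y' = w" using m_lcancel[OF r0 rc] y' x wc by simp
            hence "x \<in> S" "y' \<in> S" using wg[OF x y'(1)] by blast+
            thus ?thesis using y' mS rS by simp
          qed
        qed
      next
        case False
        have "\<not> irreducible (R\<lparr>carrier := S\<rparr>) r" using False r0 unfolding ring_irreducible_def by simp
        moreover have "r \<notin> Units (R\<lparr>carrier := S\<rparr>)" using nU U by simp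
        ultimately obtain b where bS: "b \<in> S" and pf: "properfactor (R\<lparr>carrier := S\<rparr>) b r"
          and bnU: "b \<notin> Units R"
          using U unfolding irreducible_def by auto
        obtain c where cS: "c \<in> S" and rbc: "r = b \<otimes> c" using pf unfolding properfactor_def factor_def by auto
        have nd: "\<not> (\<exists>d\<in>S. b = r \<otimes> d)" using pf unfolding properfactor_def factor_def by auto
        have bc: "b \<in> carrier R" and cc: "c \<in> carrier R" using bS cS Sc by auto
        have b0: "b \<noteq> \<zero>" and c0: "c \<noteq> \<zero>" using r0 rbc bc cc by auto
        have cnU: "c \<notin> Units R"
        proof
          assume cu: "c \<in> Units R"
          have "r \<otimes> inv c = b" using rbc cu bc cc by (simp add: m_assoc Units_r_inv)
          moreover have "inv c \<in> S" using cu US by auto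
          ultimately show False using nd by metis
        qed
        have pb: "properfactor (mult_of R) b r"
          unfolding properfactor_def factor_def
        proof (simp, intro conjI)
          show "\<exists>c\<in>carrier R - {\<zero>}. r = b \<otimes> c" using cc c0 rbc by blast
          show "\<forall>d\<in>carrier R - {\<zero>}. b \<noteq> r \<otimes> d"
          proof (intro ballI notI)
            fix d assume d: "d \<in> carrier R - {\<zero>}" and bd: "b = r \<otimes> d"
            have "r \<otimes> (d \<otimes> c) = (r \<otimes> d) \<otimes> c" using d rc cc by (simp add: m_assoc)
            also have "\<dots> = r" by (simp only: bd[symmetric] rbc[symmetric])
            finally have "r \<otimes> \<one> = r \<otimes> (d \<otimes> c)" using rc by simp
            hence "\<one> = d \<otimes> c" using m_lcancel[OF r0 rc] d cc by simp
            hence "d \<otimes> c \<in> Units R" by (metis Units_one_closed)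
            hence "c \<otimes> d \<in> Units R" using m_comm[of d c] d cc by simp
            hence "c \<in> Units R" using unit_factor[of c d] d cc by blast
            thus False using cnU by simp
          qed
        qed
        have pc: "properfactor (mult_of R) c r"
          unfolding properfactor_def factor_def
        proof (simp, intro conjI)
          show "\<exists>c'\<in>carrier R - {\<zero>}. r = c \<otimes> c'" using bc b0 rbc m_comm cc by blast
          show "\<forall>d\<in>carrier R - {\<zero>}. c \<noteq> r \<otimes> d"
          proof (intro ballI notI)
            fix d assume d: "d \<in> carrier R - {\<zero>}" and cd: "c = r \<otimes> d"
            have "r \<otimes> (b \<otimes> d) = b \<otimes> (r \<otimes> d)" using d bc rc by (simp add: m_lcomm)
            also have "\<dots> = r" by (simp only: cd[symmetric] rbc[symmetric])
            finally have "r \<otimes> \<one> = r \<otimes> (b \<otimes> d)" using rc by simp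
            hence "\<one> = b \<otimes> d" using m_lcancel[OF r0 rc] d bc by simp
            hence "b \<otimes> d \<in> Units R" by (metis Units_one_closed)
            hence "b \<in> Units R" using unit_factor[of b d] d bc by blast
            thus False using bnU by simp
          qed
        qed
        have gcw: "good (c \<otimes> w)" using IH[OF pc _ cS 1(4)] cc c0 by blast
        have "good (b \<otimes> (c \<otimes> w))" using IH[OF pb _ bS gcw] bc b0 by blast
        thus ?thesis using rbc bc cc wc by (simp add: m_assoc)
      qed
    qed
  qed
  have g1: "good \<one>"
  proof (rule goodI)
    show "\<one> \<in> S" using sub subringE(3) by blast
    show "\<one> \<noteq> \<zero>" by simp
    fix x y assume x: "x \<in> carrier R" and y: "y \<in> carrier R" and e: "x \<otimes> y = \<one>"
    have xy: "x \<otimes> y \<in> Units R" using e by simp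
    have yx: "y \<otimes> x \<in> Units R" using xy m_comm[of x y] x y by simp
    have "x \<in> Units R" "y \<in> Units R" using unit_factor[OF xy x y] unit_factor[OF yx y x] by auto
    thus "x \<in> S \<and> y \<in> S" using US by auto
  qed
  show ?thesis
  proof (intro ballI impI)
    fix x y assume x: "x \<in> carrier R" and y: "y \<in> carrier R" and e: "x \<otimes> y \<in> S - {\<zero>}"
    have "good ((x \<otimes> y) \<otimes> \<one>)" using main[OF _ _ g1] e x y by simp
    thus "x \<in> S \<and> y \<in> S" using x y unfolding good_def by simp
  qed
qed

theorem lemma3p2:
  fixes A (structure) and R :: "'a set"
  assumes "factorial_domain A"
    and "subring R A"
    and "Units (A\<lparr>carrier := R\<rparr>) = Units A"
  shows "(\<forall>x \<in> R. ring_irreducible\<^bsub>A\<lparr>carrier := R\<rparr>\<^esub> x \<longrightarrow> ring_irreducible\<^bsub>A\<^esub> x)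
     \<longleftrightarrow> (\<forall>x \<in> carrier A. \<forall>y \<in> carrier A. x \<otimes> y \<in> R - {\<zero>} \<longrightarrow> x \<in> R \<and> y \<in> R)"
proof -
  interpret factorial_domain A by fact
  show ?thesis
  proof
    assume h: "\<forall>x \<in> R. ring_irreducible\<^bsub>A\<lparr>carrier := R\<rparr>\<^esub> x \<longrightarrow> ring_irreducible\<^bsub>A\<^esub> x"
    show "\<forall>x \<in> carrier A. \<forall>y \<in> carrier A. x \<otimes> y \<in> R - {\<zero>} \<longrightarrow> x \<in> R \<and> y \<in> R"
      by (rule irr_imp_fc[OF assms(2,3) h])
  next
    assume h: "\<forall>x \<in> carrier A. \<forall>y \<in> carrier A. x \<otimes> y \<in> R - {\<zero>} \<longrightarrow> x \<in> R \<and> y \<in> R"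
    show "\<forall>x \<in> R. ring_irreducible\<^bsub>A\<lparr>carrier := R\<rparr>\<^esub> x \<longrightarrow> ring_irreducible\<^bsub>A\<^esub> x"
      using fc_imp_irr[OF assms(2,3) h] by blast
  qed
qed

end
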